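(* Consider the interior permanent magnet synchronous machine (IPMSM) model in the stator frame with state $x=(i_\alpha,i_\beta,\omega,\theta)^T$, input $u=\mathcal{V}=(v_\alpha,v_\beta)^T$ and output $y=h(x)=\mathcal{I}=(i_\alpha,i_\beta)^T$: \[ \frac{d\mathcal{I}}{dt}=\mathfrak{L}(\theta)^{-1}\Big(\mathcal{V}-\big(R\,\mathbb{I}_2+\omega\,\mathfrak{L}'(\theta)\big)\mathcal{I}-\psi_r\,\mathcal{C}'(\theta)\,\omega\Big),\qquad \frac{d\omega}{dt}=\frac{p}{J}(T_m-T_l),\qquad \frac{d\theta}{dt}=\omega, \] where $\mathfrak{L}(\theta)=\begin{bmatrix}L_0+L_2\cos2\theta & L_2\sin 2\theta\\ L_2\sin2\theta & L_0-L_2\cos2\theta\end{bmatrix}$, $\mathfrak{L}'=\partial\mathfrak{L}/\partial\theta$, $\mathcal{C}'(\theta)=(-\sin\theta,\cos\theta)^T$, and $T_m=\frac{3p}{2}\big[\psi_r(i_\beta\cos\theta-i_\alpha\sin\theta)-L_2\big((i_\alpha^2-i_\beta^2)\sin2\theta-2i_\alpha i_\beta\cos2\theta\big)\big]$. Let $L_d=L_0+L_2$, $L_q=L_0-L_2$ (both nonzero), $L_\delta=L_d-L_q=2L_2$, and let $i_d=i_\alpha\cos\theta+i_\beta\sin\theta$, $i_q=-i_\alpha\sin\theta+i_\beta\cos\theta$ be the rotor-frame currents, with $\frac{di_d}{dt},\frac{di_q}{dt}$ their time derivatives along the model. Let $\Delta_{y1}$ be the determinant of the $4\times4$ matrix $\frac{\partial}{\partial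 x}\begin{bmatrix} h(x)\\ \mathcal{L}_f h(x)\end{bmatrix}$ (gradient of the output and of its first time derivative). Then \[ \Delta_{y1}=\frac{1}{L_dL_q}\Big[(L_\delta i_d+\psi_r)^2+L_\delta^2 i_q^2\Big]\omega+\frac{L_\delta}{L_dL_q}\Big[L_\delta\frac{di_d}{dt}\,i_q-(L_\delta i_d+\psi_r)\frac{di_q}{dt}\Big]. \] Consequently, defining the observability vector $\Psi_{\mathcal O}$ with rotor-frame components $\Psi_{\mathcal{O}d}=L_\delta i_d+\psi_r$, $\Psi_{\mathcal{O}q}=L_\delta i_q$, and its phase $\theta_{\mathcal O}=\arctan\!\big(\frac{L_\delta i_q}{L_\delta i_d+\psi_r}\big)$ in the rotor frame, at any state where $\Psi_{\mathcal O}\neq0$ and \[ \omega\neq\frac{d}{dt}\theta_{\mathcal O}, \] the observability rank condition holds and the IPMSM is locally weakly observable there. In particular, at standstill ($\omega=0$) local observability is guaranteed if $\Psi_{\mathcal O}$ changes its orientation in the rotor frame.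
   Context: For a system $\dot x=f(x,u)$, $y=h(x)$ with $x\in\mathbb{R}^n$, the Lie derivatives are $\mathcal{L}_f^0h=h$, $\mathcal{L}_fh=\frac{\partial h}{\partial x}f$, $\mathcal{L}_f^kh=\mathcal{L}_f\mathcal{L}_f^{k-1}h$. The system satisfies the observability rank condition at $x_0$ if the matrix $\frac{\partial}{\partial x}[\mathcal{L}_f^0h;\mathcal{L}_fh;\dots;\mathcal{L}_f^{n-1}h]$ at $x_0$ has full rank $n$; this implies local weak observability at $x_0$ (Hermann–Krener). Here $R$ is the stator winding resistance, $\psi_r$ the rotor permanent-magnet flux, $p$ the number of pole pairs, $J$ the inertia, $T_l$ the load torque, $\omega$ the electrical rotor speed and $\theta$ the electrical rotor position; $\mathbb{I}_2$ is the $2\times2$ identity. *)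

theory Defs
  imports "HOL-Analysis.Analysis"
begin

definition lie :: "('a::real_normed_vector \<Rightarrow> 'a) \<Rightarrow> ('a \<Rightarrow> 'b::real_normed_vector) \<Rightarrow> 'a \<Rightarrow> 'b" where
  "lie F g x = frechet_derivative g (at x) (F x)"

fun lie_iter :: "('a::real_normed_vector \<Rightarrow> 'a) \<Rightarrow> ('a \<Rightarrow> 'b::real_normed_vector) \<Rightarrow> nat \<Rightarrow> 'a \<Rightarrow> 'b" where
  "lie_iter F g 0 = g"
| "lie_iter F g (Suc k) = lie F (lie_iter F g k)"

text \<open>Observability rank condition at x0: the matrix obtained by stacking the Jacobians
  of L_F^0 h, ..., L_F^(n-1) h at x0 has rank n (rank = dimension of the row space,
  i.e. of the span of all rows of all stacked blocks).\<close>
definition obs_rank_condition :: "(real^'n \<Rightarrow> real^'n) \<Rightarrow> (real^'n \<Rightarrow> real^'m) \<Rightarrow> real^'n \<Rightarrow> bool" where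
  "obs_rank_condition F h x0 \<longleftrightarrow>
     dim (\<Union>k<CARD('n). rows (jacobian (lie_iter F h k) (at x0))) = CARD('n)"

text \<open>IPMSM model in the stator frame. State x = (i_alpha, i_beta, omega, theta),
  i.e. x$1 = i_alpha, x$2 = i_beta, x$3 = omega, x$4 = theta; input u = V = (v_alpha, v_beta).\<close>

definition Lmat :: "real \<Rightarrow> real \<Rightarrow> real \<Rightarrow> real^2^2" where
  "Lmat L0 L2 \<theta> = vector [vector [L0 + L2 * cos (2*\<theta>), L2 * sin (2*\<theta>)],
                             vector [L2 * sin (2*\<theta>), L0 - L2 * cos (2*\<theta>)]]"

definition dLmat :: "real \<Rightarrow> real \<Rightarrow> real^2^2" where
  "dLmat L2 \<theta> = vector [vector [- 2 * L2 * sin (2*\<theta>), 2 * L2 * cos (2*\<theta>)],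
                          vector [2 * L2 * cos (2*\<theta>), 2 * L2 * sin (2*\<theta>)]]"

definition Cp :: "real \<Rightarrow> real^2" where
  "Cp \<theta> = vector [- sin \<theta>, cos \<theta>]"

definition Tm :: "real \<Rightarrow> real \<Rightarrow> real \<Rightarrow> real^4 \<Rightarrow> real" where
  "Tm p \<psi>r L2 x = 3 * p / 2 *
     (\<psi>r * (x$2 * cos (x$4) - x$1 * sin (x$4))
      - L2 * ((x$1^2 - x$2^2) * sin (2 * x$4) - 2 * x$1 * x$2 * cos (2 * x$4)))"

definition ipmsm_f :: "real \<Rightarrow> real \<Rightarrow> real \<Rightarrow> real \<Rightarrow> real \<Rightarrow> real \<Rightarrow> real \<Rightarrow>
                       real^4 \<Rightarrow> real^2 \<Rightarrow> real^4" where
  "ipmsm_f R \<psi>r p J Tl L0 L2 x u =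
     (let I = (vector [x$1, x$2] :: real^2); \<omega> = x$3; \<theta> = x$4;
          dI = matrix_inv (Lmat L0 L2 \<theta>) *v
                 (u - (R *\<^sub>R I + \<omega> *\<^sub>R (dLmat L2 \<theta> *v I)) - (\<psi>r * \<omega>) *\<^sub>R Cp \<theta>)
      in vector [dI$1, dI$2, p / J * (Tm p \<psi>r L2 x - Tl), \<omega>])"

definition ipmsm_h :: "real^4 \<Rightarrow> real^2" where
  "ipmsm_h x = vector [x$1, x$2]"

definition i_d :: "real^4 \<Rightarrow> real" where
  "i_d x = x$1 * cos (x$4) + x$2 * sin (x$4)"

definition i_q :: "real^4 \<Rightarrow> real" where
  "i_q x = - x$1 * sin (x$4) + x$2 * cos (x$4)"

end

theory Submission
  imports Defs
begin
lemma exhaust_4: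
  fixes x :: 4
  shows "x = 1 \<or> x = 2 \<or> x = 3 \<or> x = 4"
proof (induct x)
  case (of_int z)
  then have "z = 0 | z = 1 | z = 2 | z = 3"
    by fastforce
  then show ?case
    by auto
qed

lemma UNIV_4: "UNIV = {1, 2, 3, 4::4}"
  using exhaust_4 by auto

lemma det_4:
  "det (A::'a::comm_ring_1^4^4) =
   A$1$1*A$2$2*A$3$3*A$4$4 - A$1$1*A$2$2*A$3$4*A$4$3 - A$1$1*A$2$3*A$3$2*A$4$4
 + A$1$1*A$2$3*A$3$4*A$4$2 + A$1$1*A$2$4*A$3$2*A$4$3 - A$1$1*A$2$4*A$3$3*A$4$2
 - A$1$2*A$2$1*A$3$3*A$4$4 + A$1$2*A$2$1*A$3$4*A$4$3 + A$1$2*A$2$3*A$3$1*A$4$4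
 - A$1$2*A$2$3*A$3$4*A$4$1 - A$1$2*A$2$4*A$3$1*A$4$3 + A$1$2*A$2$4*A$3$3*A$4$1
 + A$1$3*A$2$1*A$3$2*A$4$4 - A$1$3*A$2$1*A$3$4*A$4$2 - A$1$3*A$2$2*A$3$1*A$4$4
 + A$1$3*A$2$2*A$3$4*A$4$1 + A$1$3*A$2$4*A$3$1*A$4$2 - A$1$3*A$2$4*A$3$2*A$4$1
 - A$1$4*A$2$1*A$3$2*A$4$3 + A$1$4*A$2$1*A$3$3*A$4$2 + A$1$4*A$2$2*A$3$1*A$4$3
 - A$1$4*A$2$2*A$3$3*A$4$1 - A$1$4*A$2$3*A$3$1*A$4$2 + A$1$4*A$2$3*A$3$2*A$4$1"
proof -
  have f1: "finite {2::4, 3, 4}" "1 \<notin> {2::4, 3, 4}" by auto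
  have f2: "finite {3::4, 4}" "2 \<notin> {3::4, 4}" by auto
  have f3: "finite {4::4}" "3 \<notin> {4::4}" by auto
  show ?thesis
    unfolding det_def UNIV_4
    unfolding sum_over_permutations_insert[OF f1]
    unfolding sum_over_permutations_insert[OF f2]
    unfolding sum_over_permutations_insert[OF f3]
    unfolding permutes_sing
    by (simp add: sign_swap_id permutation_swap_id sign_compose permutation_compose sign_id swap_id_eq algebra_simps)
qed

lemma matrix_inv_eqI:
  fixes A B :: "real^'n^'n"
  assumes "A ** B = mat 1" "B ** A = mat 1"
  shows "matrix_inv A = B"
proof -
  have "\<exists>A'. A ** A' = mat 1 \<and> A' ** A = mat 1" using assms by blast
  then have h: "A ** matrix_inv A = mat 1 \<and> matrix_inv A ** A = mat 1"
    unfolding matrix_inv_def by (rule someI_ex)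
  have "matrix_inv A = matrix_inv A ** (A ** B)" using assms by simp
  also have "\<dots> = (matrix_inv A ** A) ** B" by (simp add: matrix_mul_assoc)
  also have "\<dots> = B" using h by simp
  finally show ?thesis .
qed

definition Minv :: "real \<Rightarrow> real \<Rightarrow> real \<Rightarrow> real^2^2" where
  "Minv L0 L2 t = vector [vector [(L0 - L2 * cos (2*t)) / (L0^2 - L2^2), - L2 * sin (2*t) / (L0^2 - L2^2)],
                          vector [- L2 * sin (2*t) / (L0^2 - L2^2), (L0 + L2 * cos (2*t)) / (L0^2 - L2^2)]]"

lemma Lmat_inv:
  assumes "L0^2 - L2^2 \<noteq> (0::real)"
  shows "matrix_inv (Lmat L0 L2 t) = Minv L0 L2 t"
proof (rule matrix_inv_eqI)
  have k: "(L0 + L2 * cos(2*t))*(L0 - L2 * cos(2*t)) - L2 * sin(2*t)*(L2 * sin(2*t)) = L0^2 - L2^2"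
    by (simp add: algebra_simps power2_eq_square[symmetric] sin_squared_eq)
  show "Lmat L0 L2 t ** Minv L0 L2 t = mat 1"
    unfolding Lmat_def Minv_def using assms
    apply (simp add: matrix_matrix_mult_def sum_2 vec_eq_iff forall_2 mat_def)
    using k by (simp add: diff_divide_distrib[symmetric] mult.commute)
  show "Minv L0 L2 t ** Lmat L0 L2 t = mat 1"
    unfolding Lmat_def Minv_def using assms
    apply (simp add: matrix_matrix_mult_def sum_2 vec_eq_iff forall_2 mat_def)
    using k by (simp add: diff_divide_distrib[symmetric] mult.commute algebra_simps)
qed

lemma lemA:
  fixes m11 m12 m22 v1 v2 q1 q2 :: real
  shows "(-(m11 * v1 + m12 * v2))*(-(m12*q1 + m22*q2)) - (-(m12 * v1 + m22 * v2))*(-(m11*q1 + m12*q2))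
        = (m11*m22 - m12^2)*(v1*q2 - v2*q1)"
  by algebra

lemma lemB0:
  fixes L0 L2 Cc Ss ra rb D :: real
  assumes D: "D \<noteq> 0" "D = L0^2 - L2^2" and cs: "Cc^2 + Ss^2 = 1"
  defines "m11 \<equiv> (L0 - L2 * Cc) / D" and "m12 \<equiv> - L2 * Ss / D"
    and "m22 \<equiv> (L0 + L2 * Cc) / D"
  shows "-2*m12*ra + (m11 - m22)*rb = - (m11 * (2*L2*(-Ss*(m11*ra+m12*rb) + Cc*(m12*ra+m22*rb)))
                                        + m12 * (2*L2*(Cc*(m11*ra+m12*rb) + Ss*(m12*ra+m22*rb))))"
    "(m11 - m22)*ra + 2*m12*rb = - (m12 * (2*L2*(-Ss*(m11*ra+m12*rb) + Cc*(m12*ra+m22*rb)))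
                                        + m22 * (2*L2*(Cc*(m11*ra+m12*rb) + Ss*(m12*ra+m22*rb))))"
    "m11*m22 - m12^2 = 1 / D"
proof -
  show "-2*m12*ra + (m11 - m22)*rb = - (m11 * (2*L2*(-Ss*(m11*ra+m12*rb) + Cc*(m12*ra+m22*rb)))
                                        + m12 * (2*L2*(Cc*(m11*ra+m12*rb) + Ss*(m12*ra+m22*rb))))"
    unfolding m11_def m12_def m22_def using D(1)
    apply (simp add: field_simps)
    using D(2) cs by algebra
  show "(m11 - m22)*ra + 2*m12*rb = - (m12 * (2*L2*(-Ss*(m11*ra+m12*rb) + Cc*(m12*ra+m22*rb)))
                                        + m22 * (2*L2*(Cc*(m11*ra+m12*rb) + Ss*(m12*ra+m22*rb))))"
    unfolding m11_def m12_def m22_def using D(1)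
    apply (simp add: field_simps)
    using D(2) cs by algebra
  show "m11*m22 - m12^2 = 1 / D"
    unfolding m11_def m12_def m22_def using D(1)
    apply (simp add: field_simps)
    using D(2) cs by algebra
qed

lemma vector_4 [simp]:
 "(vector [x,y,z,w] ::('a::zero)^4)$1 = x"
 "(vector [x,y,z,w] ::('a::zero)^4)$2 = y"
 "(vector [x,y,z,w] ::('a::zero)^4)$3 = z"
 "(vector [x,y,z,w] ::('a::zero)^4)$4 = w"
  unfolding vector_def by simp_all

lemma partial_deriv:
  fixes g :: "real^'n \<Rightarrow> real"
  assumes dg: "g differentiable (at x)" and dd: "((\<lambda>t. g (x + t *\<^sub>R v)) has_real_derivative d) (at 0)"
  shows "frechet_derivative g (at x) v = d"
proof -
  let ?D = "frechet_derivative g (at x)"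
  have gD: "(g has_derivative ?D) (at (x + 0 *\<^sub>R v))" using dg[unfolded frechet_derivative_works] by simp
  have lin: "((\<lambda>t::real. x + t *\<^sub>R v) has_derivative (\<lambda>t. t *\<^sub>R v)) (at 0)"
    by (intro derivative_eq_intros) auto
  have "((\<lambda>t. g (x + t *\<^sub>R v)) has_derivative (\<lambda>t. ?D (t *\<^sub>R v))) (at 0)"
    using diff_chain_at[OF lin gD] by (simp add: o_def)
  moreover have "((\<lambda>t. g (x + t *\<^sub>R v)) has_derivative (\<lambda>t. d * t)) (at 0)"
    using dd by (simp add: has_field_derivative_def)
  ultimately have "(\<lambda>t. ?D (t *\<^sub>R v)) = (\<lambda>t. d * t)" by (rule has_derivative_unique)
  from fun_cong[OF this, of 1] show ?thesis by simp
qed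

lemma axis_comp4:
  fixes x :: "real^4"
  shows "(x + t *\<^sub>R axis 3 1) $ 1 = x $ 1" "(x + t *\<^sub>R axis 3 1) $ 2 = x $ 2"
    "(x + t *\<^sub>R axis 3 1) $ 3 = x $ 3 + t" "(x + t *\<^sub>R axis 3 1) $ 4 = x $ 4"
    "(x + t *\<^sub>R axis 4 1) $ 1 = x $ 1" "(x + t *\<^sub>R axis 4 1) $ 2 = x $ 2"
    "(x + t *\<^sub>R axis 4 1) $ 3 = x $ 3" "(x + t *\<^sub>R axis 4 1) $ 4 = x $ 4 + t"
  by (simp_all add: axis_def)

definition m11 :: "real \<Rightarrow> real \<Rightarrow> real \<Rightarrow> real" where
  "m11 L0 L2 t = (L0 - L2 * cos (2*t)) / (L0^2 - L2^2)"
definition m12 :: "real \<Rightarrow> real \<Rightarrow> real \<Rightarrow> real" where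
  "m12 L0 L2 t = - L2 * sin (2*t) / (L0^2 - L2^2)"
definition m22 :: "real \<Rightarrow> real \<Rightarrow> real \<Rightarrow> real" where
  "m22 L0 L2 t = (L0 + L2 * cos (2*t)) / (L0^2 - L2^2)"
definition rr1 :: "real \<Rightarrow> real \<Rightarrow> real \<Rightarrow> real \<Rightarrow> real \<Rightarrow> real \<Rightarrow> real \<Rightarrow> real \<Rightarrow> real" where
  "rr1 R \<psi>r L2 u1 a b w t = u1 - R * a - w * (- 2 * L2 * sin (2*t) * a + 2 * L2 * cos (2*t) * b) + \<psi>r * w * sin t"
definition rr2 :: "real \<Rightarrow> real \<Rightarrow> real \<Rightarrow> real \<Rightarrow> real \<Rightarrow> real \<Rightarrow> real \<Rightarrow> real \<Rightarrow> real" where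
  "rr2 R \<psi>r L2 u2 a b w t = u2 - R * b - w * (2 * L2 * cos (2*t) * a + 2 * L2 * sin (2*t) * b) - \<psi>r * w * cos t"
definition dI1 :: "real \<Rightarrow> real \<Rightarrow> real \<Rightarrow> real \<Rightarrow> real \<Rightarrow> real \<Rightarrow> real \<Rightarrow> real \<Rightarrow> real \<Rightarrow> real \<Rightarrow> real" where
  "dI1 R \<psi>r L0 L2 u1 u2 a b w t = m11 L0 L2 t * rr1 R \<psi>r L2 u1 a b w t + m12 L0 L2 t * rr2 R \<psi>r L2 u2 a b w t"
definition dI2 :: "real \<Rightarrow> real \<Rightarrow> real \<Rightarrow> real \<Rightarrow> real \<Rightarrow> real \<Rightarrow> real \<Rightarrow> real \<Rightarrow> real \<Rightarrow> real \<Rightarrow> real" where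
  "dI2 R \<psi>r L0 L2 u1 u2 a b w t = m12 L0 L2 t * rr1 R \<psi>r L2 u1 a b w t + m22 L0 L2 t * rr2 R \<psi>r L2 u2 a b w t"

lemma F_comp:
  assumes "L0^2 - L2^2 \<noteq> (0::real)"
  shows "ipmsm_f R \<psi>r p J Tl L0 L2 z u $ 1 = dI1 R \<psi>r L0 L2 (u$1) (u$2) (z$1) (z$2) (z$3) (z$4)"
    "ipmsm_f R \<psi>r p J Tl L0 L2 z u $ 2 = dI2 R \<psi>r L0 L2 (u$1) (u$2) (z$1) (z$2) (z$3) (z$4)"
    "ipmsm_f R \<psi>r p J Tl L0 L2 z u $ 4 = z$3"
  using assms
  apply (simp_all add: ipmsm_f_def Let_def Lmat_inv Minv_def dLmat_def Cp_def matrix_vector_mult_def sum_2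
      dI1_def dI2_def m11_def m12_def m22_def rr1_def rr2_def)
  apply (simp_all add: field_simps)
  done

lemma dI1_dw:
  "((\<lambda>\<tau>. dI1 R \<psi>r L0 L2 u1 u2 a b (w + \<tau>) t) has_real_derivative
     (- (m11 L0 L2 t * (-2*L2* sin(2*t)*a + 2*L2* cos(2*t)*b - \<psi>r* sin t)
       + m12 L0 L2 t * (2*L2* cos(2*t)*a + 2*L2* sin(2*t)*b + \<psi>r* cos t)))) (at 0)"
  unfolding dI1_def rr1_def rr2_def
  by (rule derivative_eq_intros refl | simp)+ (simp add: algebra_simps)

lemma dI2_dw:
  "((\<lambda>\<tau>. dI2 R \<psi>r L0 L2 u1 u2 a b (w + \<tau>) t) has_real_derivative
     (- (m12 L0 L2 t * (-2*L2* sin(2*t)*a + 2*L2* cos(2*t)*b - \<psi>r* sin t)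
       + m22 L0 L2 t * (2*L2* cos(2*t)*a + 2*L2* sin(2*t)*b + \<psi>r* cos t)))) (at 0)"
  unfolding dI2_def rr1_def rr2_def
  by (rule derivative_eq_intros refl | simp)+ (simp add: algebra_simps)

lemma m11_base: "DERIV (m11 L0 L2) y :> -2 * m12 L0 L2 y"
proof -
  have "((\<lambda>y. L0 - L2 * cos (2*y)) has_real_derivative 2 * L2 * sin (2*y)) (at y)"
    by (rule derivative_eq_intros refl | simp)+
  from DERIV_cdivide[OF this, of "L0^2 - L2^2"] show ?thesis
    unfolding m11_def m12_def by (simp add: fun_eq_iff mult.assoc)
qed

lemma m12_base: "DERIV (m12 L0 L2) y :> m11 L0 L2 y - m22 L0 L2 y"
proof -
  have "((\<lambda>y. - L2 * sin (2*y)) has_real_derivative - 2 * L2 * cos (2*y)) (at y)"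
    by (rule derivative_eq_intros refl | simp)+
  from DERIV_cdivide[OF this, of "L0^2 - L2^2"] show ?thesis
    unfolding m11_def m12_def m22_def by (simp add: fun_eq_iff diff_divide_distrib[symmetric] mult.assoc)
qed

lemma m22_base: "DERIV (m22 L0 L2) y :> 2 * m12 L0 L2 y"
proof -
  have "((\<lambda>y. L0 + L2 * cos (2*y)) has_real_derivative - 2 * L2 * sin (2*y)) (at y)"
    by (rule derivative_eq_intros refl | simp)+
  from DERIV_cdivide[OF this, of "L0^2 - L2^2"] show ?thesis
    unfolding m22_def m12_def by (simp add: fun_eq_iff mult.assoc)
qed

lemma m11_deriv[derivative_intros]:
  "(f has_real_derivative f') (at x) \<Longrightarrow> ((\<lambda>\<tau>. m11 L0 L2 (f \<tau>)) has_real_derivative (-2 * m12 L0 L2 (f x) * f')) (at x)"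
  using DERIV_chain2[OF m11_base] by blast
lemma m12_deriv[derivative_intros]:
  "(f has_real_derivative f') (at x) \<Longrightarrow> ((\<lambda>\<tau>. m12 L0 L2 (f \<tau>)) has_real_derivative ((m11 L0 L2 (f x) - m22 L0 L2 (f x)) * f')) (at x)"
  using DERIV_chain2[OF m12_base] by blast
lemma m22_deriv[derivative_intros]:
  "(f has_real_derivative f') (at x) \<Longrightarrow> ((\<lambda>\<tau>. m22 L0 L2 (f \<tau>)) has_real_derivative (2 * m12 L0 L2 (f x) * f')) (at x)"
  using DERIV_chain2[OF m22_base] by blast

lemma dI1_dt:
  shows "((\<lambda>\<tau>. dI1 R \<psi>r L0 L2 u1 u2 a b w (t + \<tau>)) has_real_derivative
     (-2 * m12 L0 L2 t * rr1 R \<psi>r L2 u1 a b w t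
      + m11 L0 L2 t * (-w*(-4*L2*(cos(2*t)*a + sin(2*t)*b) - \<psi>r* cos t))
      + (m11 L0 L2 t - m22 L0 L2 t) * rr2 R \<psi>r L2 u2 a b w t
      + m12 L0 L2 t * (-w*(-4*L2*(sin(2*t)*a - cos(2*t)*b) - \<psi>r* sin t)))) (at 0)"
  unfolding dI1_def rr1_def rr2_def
  by (rule derivative_eq_intros refl | simp)+ (simp add: algebra_simps)

lemma dI2_dt:
  shows "((\<lambda>\<tau>. dI2 R \<psi>r L0 L2 u1 u2 a b w (t + \<tau>)) has_real_derivative
     ((m11 L0 L2 t - m22 L0 L2 t) * rr1 R \<psi>r L2 u1 a b w t
      + m12 L0 L2 t * (-w*(-4*L2*(cos(2*t)*a + sin(2*t)*b) - \<psi>r* cos t))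
      + 2 * m12 L0 L2 t * rr2 R \<psi>r L2 u2 a b w t
      + m22 L0 L2 t * (-w*(-4*L2*(sin(2*t)*a - cos(2*t)*b) - \<psi>r* sin t)))) (at 0)"
  unfolding dI2_def rr1_def rr2_def
  by (rule derivative_eq_intros refl | simp)+ (simp add: algebra_simps)

lemma vec_has_derivative_at:
  fixes f :: "'a::real_normed_vector \<Rightarrow> real^'n"
  assumes "\<And>i. ((\<lambda>x. f x $ i) has_derivative (\<lambda>h. f' h $ i)) (at a)"
  shows "(f has_derivative f') (at a)"
  using assms by (subst has_derivative_componentwise_within) (auto simp: Basis_vec_def inner_axis)

lemma has_derivative_vec_nth':
  "(g has_derivative g') F \<Longrightarrow> ((\<lambda>x. g x $ i) has_derivative (\<lambda>h. g' h $ i)) F"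
  using bounded_linear.has_derivative[OF bounded_linear_vec_nth] by blast

lemma has_derivative_nth: "((\<lambda>x::real^'n. x $ i) has_derivative (\<lambda>h. h $ i)) F"
  by (rule has_derivative_vec_nth'[OF has_derivative_ident])

lemmas m11_hd = m11_base[THEN DERIV_compose_FDERIV]
lemmas m12_hd = m12_base[THEN DERIV_compose_FDERIV]
lemmas m22_hd = m22_base[THEN DERIV_compose_FDERIV]

lemma h_linear: "(ipmsm_h has_derivative ipmsm_h) (at z)"
  unfolding ipmsm_h_def
proof (rule vec_has_derivative_at)
  fix i :: 2
  show "((\<lambda>x. (vector [x $ 1, x $ 2] :: real^2) $ i) has_derivative (\<lambda>h. (vector [h $ 1, h $ 2] :: real^2) $ i)) (at z)"
    using exhaust_2[of i] by (auto simp: has_derivative_nth)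
qed

lemma lie_h: "lie F ipmsm_h z = vector [F z $ 1, F z $ 2]"
  unfolding lie_def using frechet_derivative_at[OF h_linear] by (simp add: ipmsm_h_def)

lemma g_diff:
  "(\<lambda>z::real^4. dI1 R \<psi>r L0 L2 u1 u2 (z$1) (z$2) (z$3) (z$4)) differentiable (at x)"
  "(\<lambda>z::real^4. dI2 R \<psi>r L0 L2 u1 u2 (z$1) (z$2) (z$3) (z$4)) differentiable (at x)"
  unfolding differentiable_def dI1_def dI2_def rr1_def rr2_def
  by (rule exI, (rule has_derivative_add has_derivative_diff has_derivative_mult has_derivative_minus m11_hd m12_hd m22_hd
     has_derivative_sin has_derivative_cos has_derivative_vec_nth' has_derivative_ident has_derivative_const)+)+

lemma g_partials:
  fixes x :: "real^4"
  shows
  "frechet_derivative (\<lambda>z::real^4. dI1 R \<psi>r L0 L2 u1 u2 (z$1) (z$2) (z$3) (z$4)) (at x) (axis 3 1) =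
     - (m11 L0 L2 (x$4) * (-2*L2 * sin(2*(x$4))*(x$1) + 2*L2 * cos(2*(x$4))*(x$2) - \<psi>r * sin (x$4))
       + m12 L0 L2 (x$4) * (2*L2 * cos(2*(x$4))*(x$1) + 2*L2 * sin(2*(x$4))*(x$2) + \<psi>r * cos (x$4)))"
  "frechet_derivative (\<lambda>z::real^4. dI2 R \<psi>r L0 L2 u1 u2 (z$1) (z$2) (z$3) (z$4)) (at x) (axis 3 1) =
     - (m12 L0 L2 (x$4) * (-2*L2 * sin(2*(x$4))*(x$1) + 2*L2 * cos(2*(x$4))*(x$2) - \<psi>r * sin (x$4))
       + m22 L0 L2 (x$4) * (2*L2 * cos(2*(x$4))*(x$1) + 2*L2 * sin(2*(x$4))*(x$2) + \<psi>r * cos (x$4)))"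
  "frechet_derivative (\<lambda>z::real^4. dI1 R \<psi>r L0 L2 u1 u2 (z$1) (z$2) (z$3) (z$4)) (at x) (axis 4 1) =
     (-2 * m12 L0 L2 (x$4) * rr1 R \<psi>r L2 u1 (x$1) (x$2) (x$3) (x$4)
      + m11 L0 L2 (x$4) * (-(x$3)*(-4*L2*(cos(2*(x$4))*(x$1) + sin(2*(x$4))*(x$2)) - \<psi>r * cos (x$4)))
      + (m11 L0 L2 (x$4) - m22 L0 L2 (x$4)) * rr2 R \<psi>r L2 u2 (x$1) (x$2) (x$3) (x$4)
      + m12 L0 L2 (x$4) * (-(x$3)*(-4*L2*(sin(2*(x$4))*(x$1) - cos(2*(x$4))*(x$2)) - \<psi>r * sin (x$4))))"
  "frechet_derivative (\<lambda>z::real^4. dI2 R \<psi>r L0 L2 u1 u2 (z$1) (z$2) (z$3) (z$4)) (at x) (axis 4 1) =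
     ((m11 L0 L2 (x$4) - m22 L0 L2 (x$4)) * rr1 R \<psi>r L2 u1 (x$1) (x$2) (x$3) (x$4)
      + m12 L0 L2 (x$4) * (-(x$3)*(-4*L2*(cos(2*(x$4))*(x$1) + sin(2*(x$4))*(x$2)) - \<psi>r * cos (x$4)))
      + 2 * m12 L0 L2 (x$4) * rr2 R \<psi>r L2 u2 (x$1) (x$2) (x$3) (x$4)
      + m22 L0 L2 (x$4) * (-(x$3)*(-4*L2*(sin(2*(x$4))*(x$1) - cos(2*(x$4))*(x$2)) - \<psi>r * sin (x$4))))"
  by (rule partial_deriv[OF g_diff(1)] partial_deriv[OF g_diff(2)],
      simp only: axis_comp4, rule dI1_dw dI2_dw dI1_dt dI2_dt)+

lemma G_deriv:
  fixes x :: "real^4" and g1 g2 :: "real^4 \<Rightarrow> real"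
  assumes "g1 differentiable (at x)" "g2 differentiable (at x)"
  shows "((\<lambda>z. vector [z$1, z$2, g1 z, g2 z] :: real^4) has_derivative
          (\<lambda>h. vector [h$1, h$2, frechet_derivative g1 (at x) h, frechet_derivative g2 (at x) h])) (at x)"
proof (rule vec_has_derivative_at)
  fix i :: 4
  have d1: "(g1 has_derivative frechet_derivative g1 (at x)) (at x)"
    using assms(1) frechet_derivative_works by blast
  have d2: "(g2 has_derivative frechet_derivative g2 (at x)) (at x)"
    using assms(2) frechet_derivative_works by blast
  show "((\<lambda>z. (vector [z$1, z$2, g1 z, g2 z] :: real^4) $ i) has_derivative
          (\<lambda>h. (vector [h$1, h$2, frechet_derivative g1 (at x) h, frechet_derivative g2 (at x) h] :: real^4) $ i)) (at x)"
    using exhaust_4[of i] by (auto simp: d1 d2 has_derivative_nth)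
qed

lemma lieh_deriv:
  fixes x :: "real^4" and g1 g2 :: "real^4 \<Rightarrow> real"
  assumes "g1 differentiable (at x)" "g2 differentiable (at x)"
  shows "((\<lambda>z. vector [g1 z, g2 z] :: real^2) has_derivative
          (\<lambda>h. vector [frechet_derivative g1 (at x) h, frechet_derivative g2 (at x) h])) (at x)"
proof (rule vec_has_derivative_at)
  fix i :: 2
  have d1: "(g1 has_derivative frechet_derivative g1 (at x)) (at x)"
    using assms(1) frechet_derivative_works by blast
  have d2: "(g2 has_derivative frechet_derivative g2 (at x)) (at x)"
    using assms(2) frechet_derivative_works by blast
  show "((\<lambda>z. (vector [g1 z, g2 z] :: real^2) $ i) has_derivative
          (\<lambda>h. (vector [frechet_derivative g1 (at x) h, frechet_derivative g2 (at x) h] :: real^2) $ i)) (at x)"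
    using exhaust_2[of i] by (auto simp: d1 d2)
qed

lemma det4_special:
  fixes A :: "real^4^4"
  assumes "A$1 = axis 1 1" "A$2 = axis 2 1"
  shows "det A = A$3$3*A$4$4 - A$3$4*A$4$3"
  unfolding det_4 assms by (simp add: axis_def)

lemma det_G:
  fixes x :: "real^4" and g1 g2 :: "real^4 \<Rightarrow> real"
  assumes "g1 differentiable (at x)" "g2 differentiable (at x)"
  shows "det (jacobian (\<lambda>z. vector [z$1, z$2, g1 z, g2 z] :: real^4) (at x)) =
     frechet_derivative g1 (at x) (axis 3 1) * frechet_derivative g2 (at x) (axis 4 1)
   - frechet_derivative g1 (at x) (axis 4 1) * frechet_derivative g2 (at x) (axis 3 1)"
  unfolding jacobian_def frechet_derivative_at[OF G_deriv[OF assms], symmetric]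
  by (subst det4_special) (auto simp: matrix_def vec_eq_iff axis_def)

lemma i_d_deriv: "(i_d has_derivative (\<lambda>h. h$1 * cos (x$4) + h$2 * sin (x$4) + i_q x * h$4)) (at x)"
  unfolding i_d_def
  by (rule has_derivative_eq_rhs, (rule has_derivative_add has_derivative_diff has_derivative_mult has_derivative_minus
     has_derivative_sin has_derivative_cos has_derivative_vec_nth' has_derivative_ident has_derivative_const)+,
     simp add: fun_eq_iff i_q_def algebra_simps)

lemma i_q_deriv: "(i_q has_derivative (\<lambda>h. - h$1 * sin (x$4) + h$2 * cos (x$4) - i_d x * h$4)) (at x)"
  unfolding i_q_def
  by (rule has_derivative_eq_rhs, (rule has_derivative_add has_derivative_diff has_derivative_mult has_derivative_minus
     has_derivative_sin has_derivative_cos has_derivative_vec_nth' has_derivative_ident has_derivative_const)+,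
     simp add: fun_eq_iff i_d_def algebra_simps)

lemma lie_id: "lie F i_d x = F x $ 1 * cos (x$4) + F x $ 2 * sin (x$4) + i_q x * F x $ 4"
  unfolding lie_def frechet_derivative_at[OF i_d_deriv, symmetric] by simp

lemma lie_iq: "lie F i_q x = - F x $ 1 * sin (x$4) + F x $ 2 * cos (x$4) - i_d x * F x $ 4"
  unfolding lie_def frechet_derivative_at[OF i_q_deriv, symmetric] by simp

lemma final_atoms:
  fixes m11 m12 m22 D L2 C2 S2 c s a b w r1 r2 \<psi>r :: real
  assumes B1: "-2*m12*r1 + (m11 - m22)*r2 = - (m11 * (2*L2*(-S2*(m11*r1+m12*r2) + C2*(m12*r1+m22*r2)))
                                        + m12 * (2*L2*(C2*(m11*r1+m12*r2) + S2*(m12*r1+m22*r2))))"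
    and B2: "(m11 - m22)*r1 + 2*m12*r2 = - (m12 * (2*L2*(-S2*(m11*r1+m12*r2) + C2*(m12*r1+m22*r2)))
                                        + m22 * (2*L2*(C2*(m11*r1+m12*r2) + S2*(m12*r1+m22*r2))))"
    and B3: "m11*m22 - m12^2 = 1 / D"
    and cs: "c^2 + s^2 = 1" and C2: "C2 = c^2 - s^2" and S2: "S2 = 2* s*c"
  shows "(- (m11 * (-2*L2 * S2*a + 2*L2 * C2*b - \<psi>r * s) + m12 * (2*L2 * C2*a + 2*L2 * S2*b + \<psi>r * c)))
         * ((m11 - m22) * r1 + m12 * (-w*(-4*L2*(C2*a + S2*b) - \<psi>r * c)) + 2 * m12 * r2
            + m22 * (-w*(-4*L2*(S2*a - C2*b) - \<psi>r * s)))
       - (-2 * m12 * r1 + m11 * (-w*(-4*L2*(C2*a + S2*b) - \<psi>r * c)) + (m11 - m22) * r2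
            + m12 * (-w*(-4*L2*(S2*a - C2*b) - \<psi>r * s)))
         * (- (m12 * (-2*L2 * S2*a + 2*L2 * C2*b - \<psi>r * s) + m22 * (2*L2 * C2*a + 2*L2 * S2*b + \<psi>r * c)))
       = 1 / D * (((2*L2*(a*c+b* s) + \<psi>r)^2 + (2*L2)^2*(-a* s+b*c)^2)*w
         + 2*L2*(2*L2*((m11*r1+m12*r2)*c+(m12*r1+m22*r2)* s+w*(-a* s+b*c))*(-a* s+b*c)
                 - (2*L2*(a*c+b* s)+\<psi>r)*(-(m11*r1+m12*r2)* s+(m12*r1+m22*r2)*c-w*(a*c+b* s))))"
proof -
  define p1 where "p1 = m11*r1+m12*r2"
  define p2 where "p2 = m12*r1+m22*r2"
  define v1 where "v1 = -2*L2 * S2*a + 2*L2 * C2*b - \<psi>r * s"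
  define v2 where "v2 = 2*L2 * C2*a + 2*L2 * S2*b + \<psi>r * c"
  define q1 where "q1 = 2*L2*(-S2*p1 + C2*p2) + w*(-4*L2*(C2*a + S2*b) - \<psi>r * c)"
  define q2 where "q2 = 2*L2*(C2*p1 + S2*p2) + w*(-4*L2*(S2*a - C2*b) - \<psi>r * s)"
  have T1: "-2 * m12 * r1 + m11 * (-w*(-4*L2*(C2*a + S2*b) - \<psi>r * c)) + (m11 - m22) * r2
            + m12 * (-w*(-4*L2*(S2*a - C2*b) - \<psi>r * s)) = - (m11 * q1 + m12 * q2)"
    using B1 unfolding q1_def q2_def p1_def p2_def by algebra
  have T2: "(m11 - m22) * r1 + m12 * (-w*(-4*L2*(C2*a + S2*b) - \<psi>r * c)) + 2 * m12 * r2
            + m22 * (-w*(-4*L2*(S2*a - C2*b) - \<psi>r * s)) = - (m12 * q1 + m22 * q2)"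
    using B2 unfolding q1_def q2_def p1_def p2_def by algebra
  have K: "v1 * q2 - v2 * q1 = ((2*L2*(a*c+b* s) + \<psi>r)^2 + (2*L2)^2*(-a* s+b*c)^2)*w
         + 2*L2*(2*L2*(p1*c+p2* s+w*(-a* s+b*c))*(-a* s+b*c) - (2*L2*(a*c+b* s)+\<psi>r)*(-p1* s+p2*c-w*(a*c+b* s)))"
    unfolding v1_def v2_def q1_def q2_def using cs C2 S2 by algebra
  have "(- (m11 * v1 + m12 * v2)) * (- (m12 * q1 + m22 * q2)) - (- (m11 * q1 + m12 * q2)) * (- (m12 * v1 + m22 * v2))
        = (m11*m22 - m12^2) * (v1 * q2 - v2 * q1)" by algebra
  then show ?thesis
    unfolding p1_def[symmetric] p2_def[symmetric] v1_def[symmetric] v2_def[symmetric] T1 T2 B3 K by simp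
qed

lemma det_formula:
  fixes x :: "real^4" and u :: "real^2" and R \<psi>r p J Tl L0 L2 :: real
  assumes D: "L0^2 - L2^2 \<noteq> (0::real)"
  defines "F \<equiv> (\<lambda>z. ipmsm_f R \<psi>r p J Tl L0 L2 z u)"
  shows "det (jacobian (\<lambda>z. vector [z$1, z$2, (lie F ipmsm_h z)$1, (lie F ipmsm_h z)$2] :: real^4) (at x))
     = 1 / (L0^2 - L2^2) * (((2*L2 * i_d x + \<psi>r)^2 + (2*L2)^2 * (i_q x)^2) * x$3
        + 2*L2 * (2*L2 * lie F i_d x * i_q x - (2*L2 * i_d x + \<psi>r) * lie F i_q x))"
proof -
  let ?g1 = "\<lambda>z::real^4. dI1 R \<psi>r L0 L2 (u$1) (u$2) (z$1) (z$2) (z$3) (z$4)"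
  let ?g2 = "\<lambda>z::real^4. dI2 R \<psi>r L0 L2 (u$1) (u$2) (z$1) (z$2) (z$3) (z$4)"
  have Fc: "F z $ 1 = ?g1 z" "F z $ 2 = ?g2 z" "F z $ 4 = z $ 3" for z
    unfolding F_def using F_comp[OF D] by auto
  have G: "(\<lambda>z. vector [z$1, z$2, (lie F ipmsm_h z)$1, (lie F ipmsm_h z)$2] :: real^4)
         = (\<lambda>z. vector [z$1, z$2, ?g1 z, ?g2 z])"
    by (simp add: lie_h Fc)
  have cs: "cos (2 * x$4) ^ 2 + sin (2 * x$4) ^ 2 = 1" by simp
  note B12 = lemB0(1-2)[where D="L0^2 - L2^2" and Cc="cos (2 * x$4)" and Ss="sin (2 * x$4)"
              and ra="rr1 R \<psi>r L2 (u$1) (x$1) (x$2) (x$3) (x$4)" and rb="rr2 R \<psi>r L2 (u$2) (x$1) (x$2) (x$3) (x$4)",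
              OF D refl cs, folded m11_def m12_def m22_def]
  note B3 = lemB0(3)[where D="L0^2 - L2^2" and Cc="cos (2 * x$4)" and Ss="sin (2 * x$4)",
              OF D refl cs, folded m11_def m12_def m22_def]
  have c1: "cos (x$4)^2 + sin (x$4)^2 = 1" by simp
  note FA = final_atoms[OF B12 B3, where c="cos (x$4)" and s="sin (x$4)" and a="x$1" and b="x$2" and w="x$3",
              OF c1 cos_double sin_double]
  show ?thesis
    unfolding G det_G[OF g_diff] g_partials FA
    by (simp add: lie_id lie_iq Fc i_d_def i_q_def dI1_def dI2_def algebra_simps)
qed

lemma rank_from_det:
  fixes x :: "real^4" and u :: "real^2" and R \<psi>r p J Tl L0 L2 :: real
  assumes D: "L0^2 - L2^2 \<noteq> (0::real)"
    and nz: "det (jacobian (\<lambda>z. vector [z$1, z$2, (lie (\<lambda>z. ipmsm_f R \<psi>r p J Tl L0 L2 z u) ipmsm_h z)$1,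
                  (lie (\<lambda>z. ipmsm_f R \<psi>r p J Tl L0 L2 z u) ipmsm_h z)$2] :: real^4) (at x)) \<noteq> 0"
  shows "obs_rank_condition (\<lambda>z. ipmsm_f R \<psi>r p J Tl L0 L2 z u) ipmsm_h x"
proof -
  define F where "F = (\<lambda>z. ipmsm_f R \<psi>r p J Tl L0 L2 z u)"
  let ?g1 = "\<lambda>z::real^4. dI1 R \<psi>r L0 L2 (u$1) (u$2) (z$1) (z$2) (z$3) (z$4)"
  let ?g2 = "\<lambda>z::real^4. dI2 R \<psi>r L0 L2 (u$1) (u$2) (z$1) (z$2) (z$3) (z$4)"
  let ?D1 = "frechet_derivative ?g1 (at x)"
  let ?D2 = "frechet_derivative ?g2 (at x)"
  have Fc: "F z $ 1 = ?g1 z" "F z $ 2 = ?g2 z" for z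
    unfolding F_def using F_comp[OF D] by auto
  have G: "(\<lambda>z. vector [z$1, z$2, (lie F ipmsm_h z)$1, (lie F ipmsm_h z)$2] :: real^4)
         = (\<lambda>z. vector [z$1, z$2, ?g1 z, ?g2 z])"
    by (simp add: lie_h Fc)
  have lieF: "lie F ipmsm_h = (\<lambda>z. vector [?g1 z, ?g2 z])"
    by (simp add: lie_h Fc fun_eq_iff)
  define A where "A = jacobian (\<lambda>z. vector [z$1, z$2, ?g1 z, ?g2 z] :: real^4) (at x)"
  have A: "A = matrix (\<lambda>h. vector [h$1, h$2, ?D1 h, ?D2 h] :: real^4)"
    unfolding A_def jacobian_def frechet_derivative_at[OF G_deriv[OF g_diff], symmetric] ..
  have J0: "jacobian (lie_iter F ipmsm_h 0) (at x) = matrix ipmsm_h"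
    unfolding jacobian_def by (simp add: frechet_derivative_at[OF h_linear, symmetric])
  have J1: "jacobian (lie_iter F ipmsm_h 1) (at x) = matrix (\<lambda>h. vector [?D1 h, ?D2 h] :: real^2)"
    unfolding jacobian_def by (simp add: lieF frechet_derivative_at[OF lieh_deriv[OF g_diff], symmetric])
  have detA: "det A \<noteq> 0" using nz unfolding A_def F_def[symmetric] G .
  have rk: "rank A = 4"
    using detA det_eq_0_rank[of A] rank_bound[of A] by simp
  let ?U = "\<Union>k<CARD(4). rows (jacobian (lie_iter F ipmsm_h k) (at x))"
  have sub: "rows A \<subseteq> ?U"
  proof
    fix r assume "r \<in> rows A"
    then obtain i where ri: "r = row i A" unfolding rows_def by blast
    have r0: "row j (matrix ipmsm_h) \<in> ?U" for j :: 2
    proof -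
      have "row j (matrix ipmsm_h) \<in> rows (jacobian (lie_iter F ipmsm_h 0) (at x))"
        unfolding J0 rows_def by blast
      moreover have "(0::nat) \<in> {..<CARD(4)}" by simp
      ultimately show ?thesis by blast
    qed
    have r1: "row j (matrix (\<lambda>h. vector [?D1 h, ?D2 h] :: real^2)) \<in> ?U" for j :: 2
    proof -
      have "row j (matrix (\<lambda>h. vector [?D1 h, ?D2 h] :: real^2)) \<in> rows (jacobian (lie_iter F ipmsm_h 1) (at x))"
        unfolding J1 rows_def by blast
      moreover have "(1::nat) \<in> {..<CARD(4)}" by simp
      ultimately show ?thesis by blast
    qed
    have e1: "row 1 A = row 1 (matrix ipmsm_h)" "row 2 A = row 2 (matrix ipmsm_h)"
      "row 3 A = row 1 (matrix (\<lambda>h. vector [?D1 h, ?D2 h] :: real^2))"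
      "row 4 A = row 2 (matrix (\<lambda>h. vector [?D1 h, ?D2 h] :: real^2))"
      unfolding A by (simp_all add: row_def matrix_def ipmsm_h_def vec_eq_iff)
    show "r \<in> ?U" using exhaust_4[of i] ri e1 r0 r1 by auto
  qed
  have "dim (rows A) \<le> dim ?U" by (rule dim_subset[OF sub])
  moreover have "dim ?U \<le> CARD(4)" by (rule dim_subset_UNIV_cart)
  moreover have "dim (rows A) = 4" using rk by (simp only: row_rank_def)
  ultimately show ?thesis unfolding obs_rank_condition_def F_def[symmetric] by simp
qed

lemma phi_alg:
  fixes P Pd Pq dd dq c s :: real
  assumes E: "Pd * (P * c) + dd * s = Pq * (P * - s) + dq * c"
    and H: "Pd * s = Pq * c" and cs: "s^2 + c^2 = 1"
  shows "P * (Pd^2 + Pq^2) = Pd * dq - Pq * dd"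
  using assms by algebra

lemma phi_relation:
  fixes Pd Pq \<phi> :: "real^4 \<Rightarrow> real" and x :: "real^4"
  assumes dd: "(Pd has_derivative dPd) (at x)" and dq: "(Pq has_derivative dPq) (at x)"
    and dphi: "\<phi> differentiable (at x)" and e: "e > 0"
    and eq: "\<forall>z. dist z x < e \<longrightarrow> Pd z * sin (\<phi> z) = Pq z * cos (\<phi> z)"
  shows "frechet_derivative \<phi> (at x) v * (Pd x ^2 + Pq x ^2) = Pd x * dPq v - Pq x * dPd v"
proof -
  let ?P = "frechet_derivative \<phi> (at x)"
  have dp: "(\<phi> has_derivative ?P) (at x)" using dphi frechet_derivative_works by blast
  have d1: "((\<lambda>z. Pd z * sin (\<phi> z)) has_derivative (\<lambda>h. Pd x * (?P h * cos (\<phi> x)) + dPd h * sin (\<phi> x))) (at x)"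
    by (rule has_derivative_eq_rhs, (rule has_derivative_mult has_derivative_sin dd dp)+, simp add: fun_eq_iff)
  have d2: "((\<lambda>z. Pq z * cos (\<phi> z)) has_derivative (\<lambda>h. Pq x * (?P h * - sin (\<phi> x)) + dPq h * cos (\<phi> x))) (at x)"
    by (rule has_derivative_eq_rhs, (rule has_derivative_mult has_derivative_cos dq dp)+, simp add: fun_eq_iff)
  have d2': "((\<lambda>z. Pd z * sin (\<phi> z)) has_derivative (\<lambda>h. Pq x * (?P h * - sin (\<phi> x)) + dPq h * cos (\<phi> x))) (at x)"
    by (rule has_derivative_transform_within[OF d2 e]) (use eq in auto)
  have "(\<lambda>h. Pd x * (?P h * cos (\<phi> x)) + dPd h * sin (\<phi> x)) = (\<lambda>h. Pq x * (?P h * - sin (\<phi> x)) + dPq h * cos (\<phi> x))"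
    by (rule has_derivative_unique[OF d1 d2'])
  then have E: "Pd x * (?P v * cos (\<phi> x)) + dPd v * sin (\<phi> x) = Pq x * (?P v * - sin (\<phi> x)) + dPq v * cos (\<phi> x)"
    by (rule fun_cong)
  have H: "Pd x * sin (\<phi> x) = Pq x * cos (\<phi> x)" using eq e by simp
  show ?thesis by (rule phi_alg[OF E H]) simp
qed

lemma part2:
  fixes x :: "real^4" and u :: "real^2" and R \<psi>r p J Tl L0 L2 e :: real and \<phi> :: "real^4 \<Rightarrow> real"
  assumes D: "L0^2 - L2^2 \<noteq> (0::real)"
    and nz: "(2*L2 * i_d x + \<psi>r, 2*L2 * i_q x) \<noteq> (0, 0)"
    and dphi: "\<phi> differentiable (at x)" and e: "e > 0"
    and eq: "\<forall>z. dist z x < e \<longrightarrow> (2*L2 * i_d z + \<psi>r) * sin (\<phi> z) = (2*L2 * i_q z) * cos (\<phi> z)"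
    and w: "x$3 \<noteq> lie (\<lambda>z. ipmsm_f R \<psi>r p J Tl L0 L2 z u) \<phi> x"
  shows "obs_rank_condition (\<lambda>z. ipmsm_f R \<psi>r p J Tl L0 L2 z u) ipmsm_h x"
proof (rule rank_from_det[OF D])
  define F where "F = (\<lambda>z. ipmsm_f R \<psi>r p J Tl L0 L2 z u)"
  let ?Did = "\<lambda>h::real^4. h$1 * cos (x$4) + h$2 * sin (x$4) + i_q x * h$4"
  let ?Diq = "\<lambda>h::real^4. - h$1 * sin (x$4) + h$2 * cos (x$4) - i_d x * h$4"
  have dd: "((\<lambda>z. 2*L2 * i_d z + \<psi>r) has_derivative (\<lambda>h. 2*L2 * ?Did h)) (at x)"
    by (rule has_derivative_eq_rhs, (rule has_derivative_add has_derivative_mult has_derivative_const i_d_deriv)+, simp add: fun_eq_iff)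
  have dq: "((\<lambda>z. 2*L2 * i_q z) has_derivative (\<lambda>h. 2*L2 * ?Diq h)) (at x)"
    by (rule has_derivative_eq_rhs, (rule has_derivative_add has_derivative_mult has_derivative_const i_q_deriv)+, simp add: fun_eq_iff)
  note Rel = phi_relation[OF dd dq dphi e eq, of "F x"]
  have lphi: "lie F \<phi> x = frechet_derivative \<phi> (at x) (F x)" by (simp add: lie_def)
  have pos: "(2*L2 * i_d x + \<psi>r)^2 + (2*L2 * i_q x)^2 > 0"
    using nz by (simp add: sum_power2_gt_zero_iff)
  have K: "((2*L2 * i_d x + \<psi>r)^2 + (2*L2)^2 * (i_q x)^2) * x$3
        + 2*L2 * (2*L2 * lie F i_d x * i_q x - (2*L2 * i_d x + \<psi>r) * lie F i_q x)
        = ((2*L2 * i_d x + \<psi>r)^2 + (2*L2 * i_q x)^2) * (x$3 - lie F \<phi> x)"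
    using Rel unfolding lphi lie_id lie_iq by algebra
  have ne: "x$3 - lie F \<phi> x \<noteq> 0" using w unfolding F_def by simp
  have nz2: "((2*L2 * i_d x + \<psi>r)^2 + (2*L2 * i_q x)^2) * (x$3 - lie F \<phi> x) \<noteq> 0"
    using pos ne by (metis mult_eq_0_iff order_less_irrefl)
  show "det (jacobian (\<lambda>z. vector [z$1, z$2, (lie (\<lambda>z. ipmsm_f R \<psi>r p J Tl L0 L2 z u) ipmsm_h z)$1,
                  (lie (\<lambda>z. ipmsm_f R \<psi>r p J Tl L0 L2 z u) ipmsm_h z)$2] :: real^4) (at x)) \<noteq> 0"
    unfolding det_formula[OF D] unfolding F_def[symmetric] K using D nz2 by simp
qed

theorem mainTheorem1:
  fixes R \<psi>r p J Tl L0 L2 :: real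
  defines "Ld \<equiv> L0 + L2" and "Lq \<equiv> L0 - L2" and "L\<delta> \<equiv> (L0 + L2) - (L0 - L2)"
  assumes hLd: "Ld \<noteq> 0" and hLq: "Lq \<noteq> 0"
  shows
    \<comment> \<open>determinant formula for Delta_y1\<close>
    "(\<forall>(x::real^4) (u::real^2).
       let F = (\<lambda>z. ipmsm_f R \<psi>r p J Tl L0 L2 z u);
           G = (\<lambda>z. vector [z$1, z$2, (lie F ipmsm_h z)$1, (lie F ipmsm_h z)$2] :: real^4);
           did = lie F i_d x; diq = lie F i_q x
       in det (jacobian G (at x)) =
          1 / (Ld * Lq) * ((L\<delta> * i_d x + \<psi>r)^2 + L\<delta>^2 * (i_q x)^2) * x$3
          + L\<delta> / (Ld * Lq) * (L\<delta> * did * i_q x - (L\<delta> * i_d x + \<psi>r) * diq))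
     \<and>
     \<comment> \<open>rank condition when Psi_O \<noteq> 0 and omega \<noteq> d theta_O / dt\<close>
     (\<forall>(x::real^4) (u::real^2) (\<phi>::real^4 \<Rightarrow> real) e.
       let F = (\<lambda>z. ipmsm_f R \<psi>r p J Tl L0 L2 z u);
           \<Psi>d = (\<lambda>z. L\<delta> * i_d z + \<psi>r); \<Psi>q = (\<lambda>z. L\<delta> * i_q z)
       in (\<Psi>d x, \<Psi>q x) \<noteq> (0, 0)
          \<and> \<phi> differentiable (at x)
          \<and> e > 0 \<and> (\<forall>z. dist z x < e \<longrightarrow> \<Psi>d z * sin (\<phi> z) = \<Psi>q z * cos (\<phi> z))
          \<and> x$3 \<noteq> lie F \<phi> x
          \<longrightarrow> obs_rank_condition F ipmsm_h x)
     \<and>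
     \<comment> \<open>standstill: omega = 0 and the orientation of Psi_O changes\<close>
     (\<forall>(x::real^4) (u::real^2) (\<phi>::real^4 \<Rightarrow> real) e.
       let F = (\<lambda>z. ipmsm_f R \<psi>r p J Tl L0 L2 z u);
           \<Psi>d = (\<lambda>z. L\<delta> * i_d z + \<psi>r); \<Psi>q = (\<lambda>z. L\<delta> * i_q z)
       in x$3 = 0 \<and> (\<Psi>d x, \<Psi>q x) \<noteq> (0, 0)
          \<and> \<phi> differentiable (at x)
          \<and> e > 0 \<and> (\<forall>z. dist z x < e \<longrightarrow> \<Psi>d z * sin (\<phi> z) = \<Psi>q z * cos (\<phi> z))
          \<and> lie F \<phi> x \<noteq> 0
          \<longrightarrow> obs_rank_condition F ipmsm_h x)"
proof -
  have LL: "L0^2 - L2^2 = (L0 + L2) * (L0 - L2)" by (simp add: power2_eq_square algebra_simps)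
  have D: "L0^2 - L2^2 \<noteq> 0" unfolding LL using hLd hLq unfolding Ld_def Lq_def by simp
  have Ldq: "Ld * Lq = L0^2 - L2^2" unfolding LL Ld_def Lq_def ..
  have Ldel: "L\<delta> = 2 * L2" unfolding L\<delta>_def by simp
  show ?thesis
    unfolding Let_def Ldq Ldel
  proof (intro conjI allI impI)
    fix x :: "real^4" and u :: "real^2"
    show "det (jacobian (\<lambda>z. vector [z$1, z$2, (lie (\<lambda>z. ipmsm_f R \<psi>r p J Tl L0 L2 z u) ipmsm_h z)$1,
                  (lie (\<lambda>z. ipmsm_f R \<psi>r p J Tl L0 L2 z u) ipmsm_h z)$2] :: real^4) (at x)) =
          1 / (L0^2 - L2^2) * ((2 * L2 * i_d x + \<psi>r)^2 + (2 * L2)^2 * (i_q x)^2) * x$3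
          + 2 * L2 / (L0^2 - L2^2) * (2 * L2 * lie (\<lambda>z. ipmsm_f R \<psi>r p J Tl L0 L2 z u) i_d x * i_q x
             - (2 * L2 * i_d x + \<psi>r) * lie (\<lambda>z. ipmsm_f R \<psi>r p J Tl L0 L2 z u) i_q x)"
      unfolding det_formula[OF D] by (simp add: algebra_simps add_divide_distrib diff_divide_distrib)
  next
    fix x :: "real^4" and u :: "real^2" and \<phi> :: "real^4 \<Rightarrow> real" and e :: real
    assume h: "(2 * L2 * i_d x + \<psi>r, 2 * L2 * i_q x) \<noteq> (0, 0) \<and> \<phi> differentiable at x \<and> 0 < e \<and>
       (\<forall>z. dist z x < e \<longrightarrow> (2 * L2 * i_d z + \<psi>r) * sin (\<phi> z) = 2 * L2 * i_q z * cos (\<phi> z)) \<and>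
       x $ 3 \<noteq> lie (\<lambda>z. ipmsm_f R \<psi>r p J Tl L0 L2 z u) \<phi> x"
    show "obs_rank_condition (\<lambda>z. ipmsm_f R \<psi>r p J Tl L0 L2 z u) ipmsm_h x"
      using part2[OF D] h by blast
  next
    fix x :: "real^4" and u :: "real^2" and \<phi> :: "real^4 \<Rightarrow> real" and e :: real
    assume h: "x $ 3 = 0 \<and> (2 * L2 * i_d x + \<psi>r, 2 * L2 * i_q x) \<noteq> (0, 0) \<and> \<phi> differentiable at x \<and> 0 < e \<and>
       (\<forall>z. dist z x < e \<longrightarrow> (2 * L2 * i_d z + \<psi>r) * sin (\<phi> z) = 2 * L2 * i_q z * cos (\<phi> z)) \<and>
       lie (\<lambda>z. ipmsm_f R \<psi>r p J Tl L0 L2 z u) \<phi> x \<noteq> 0"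
    show "obs_rank_condition (\<lambda>z. ipmsm_f R \<psi>r p J Tl L0 L2 z u) ipmsm_h x"
      using part2[OF D] h by (metis (no_types, lifting))
  qed
qed

end
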